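(* For every integer $k\ge0$, let $b_i$ denote the coefficient of $z^i$ in the power series expansion of $\left(\frac{\ln(1+z)}{z}\right)^{4k+1}$. Then $\nu(b_{4k})=-4k$.
   Context: $\nu(r)$ denotes the 2-adic valuation of a nonzero rational number $r$ (e.g. $\nu(4)=2$, $\nu(3)=0$, $\nu(1/8)=-3$). $\frac{\ln(1+z)}{z}=1-\frac z2+\frac{z^2}{3}-\frac{z^3}{4}+\cdots$. *)

theory Defs
  imports "HOL-Computational_Algebra.Computational_Algebra"
begin

(* 2-adic valuation of a rational number r (meaningful for r \<noteq> 0):
   nu r = v_2(numerator) - v_2(denominator) *)
definition nu2 :: "rat \<Rightarrow> int" where
  "nu2 r = (let (a, b) = quotient_of r in
              int (multiplicity (2::int) a) - int (multiplicity (2::int) b))"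

definition log1p_over_z :: "rat fps" where
  "log1p_over_z = fps_shift 1 (fps_ln 1)"

end

theory Submission
  imports Defs "HOL-Library.Z2"
begin

lemma nu2_char:
  fixes r :: rat and u c :: int and e :: nat
  assumes eq: "r * of_int u * 2 ^ e = of_int c" and u: "odd u" and c: "odd c"
  shows "nu2 r = - int e"
proof -
  obtain a b where qb: "quotient_of r = (a, b)" by (cases "quotient_of r") auto
  have bpos: "b > 0" using quotient_of_denom_pos[OF qb] .
  have r: "r = of_int a / of_int b" using quotient_of_div[OF qb] .
  have "of_int a * of_int u * 2 ^ e = (of_int c * of_int b :: rat)"
    using eq bpos unfolding r by (simp add: field_simps)
  hence ie: "a * u * 2 ^ e = c * b"
    by (metis (mono_tags, opaque_lifting) of_int_eq_iff of_int_mult of_int_numeral of_int_power)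
  have u0: "u \<noteq> 0" and c0: "c \<noteq> 0" using u c by auto
  have a0: "a \<noteq> 0" using ie c0 bpos by auto
  have p2: "prime_elem (2::int)" by simp
  have "multiplicity 2 (a * u * 2 ^ e) = multiplicity 2 a + multiplicity 2 u + e"
    using a0 u0 by (simp add: prime_elem_multiplicity_mult_distrib[OF p2])
  moreover have "multiplicity 2 (c * b) = multiplicity 2 c + multiplicity (2::int) b"
    using c0 bpos by (simp add: prime_elem_multiplicity_mult_distrib[OF p2])
  moreover have "multiplicity (2::int) u = 0" "multiplicity (2::int) c = 0"
    using u c by (auto intro: not_dvd_imp_multiplicity_0)
  ultimately have "multiplicity 2 a + e = multiplicity (2::int) b" using ie by simp
  thus ?thesis unfolding nu2_def qb by simp
qed

lemma f_nth: "log1p_over_z $ n = (-1) ^ n / of_nat (n + 1)"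
  by (simp add: log1p_over_z_def fps_ln_nth)

definition sc :: "'a::comm_ring_1 \<Rightarrow> 'a fps \<Rightarrow> 'a fps" where
  "sc c A = Abs_fps (\<lambda>n. c ^ n * A $ n)"

lemma sc_mult: "sc c (A * B) = sc c A * sc c B"
proof (rule fps_ext)
  fix n
  have "sc c (A * B) $ n = (\<Sum>i=0..n. c ^ n * (A $ i * B $ (n - i)))"
    by (simp add: sc_def fps_mult_nth sum_distrib_left)
  also have "\<dots> = (\<Sum>i=0..n. (c ^ i * A $ i) * (c ^ (n - i) * B $ (n - i)))"
  proof (rule sum.cong)
    fix i assume "i \<in> {0..n}"
    hence "c ^ n = c ^ i * c ^ (n - i)" by (simp flip: power_add)
    thus "c ^ n * (A $ i * B $ (n - i)) = (c ^ i * A $ i) * (c ^ (n - i) * B $ (n - i))"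
      by (simp add: algebra_simps)
  qed simp
  also have "\<dots> = (sc c A * sc c B) $ n" by (simp add: sc_def fps_mult_nth)
  finally show "sc c (A * B) $ n = (sc c A * sc c B) $ n" .
qed

lemma sc_one: "sc c 1 = 1"
  by (rule fps_ext) (simp add: sc_def)

lemma sc_power: "sc c (A ^ m) = (sc c A) ^ m"
  by (induction m) (simp_all add: sc_one sc_mult)

definition fI :: "int fps \<Rightarrow> 'a::comm_ring_1 fps" where
  "fI A = Abs_fps (\<lambda>n. of_int (A $ n))"

lemma fI_mult: "fI (A * B) = fI A * fI B"
  by (rule fps_ext) (simp add: fI_def fps_mult_nth)

lemma fI_one: "fI 1 = 1"
  by (rule fps_ext) (simp add: fI_def)

lemma fI_power: "fI (A ^ m) = (fI A) ^ m"
  by (induction m) (simp_all add: fI_one fI_mult)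

lemma trunc_power:
  fixes A B :: "'a::comm_ring_1 fps"
  assumes "\<And>i. i \<le> N \<Longrightarrow> A $ i = B $ i"
  shows "n \<le> N \<Longrightarrow> (A ^ m) $ n = (B ^ m) $ n"
proof (induction m arbitrary: n)
  case 0 then show ?case by simp
next
  case (Suc m)
  show ?case unfolding power_Suc fps_mult_nth
    by (rule sum.cong) (use Suc assms in auto)
qed

lemma bit_of_int: "(of_int x :: bit) = (if even x then 0 else 1)"
proof (cases "even x")
  case True then obtain y where "x = 2 * y" by blast
  then show ?thesis by simp
next
  case False then obtain y where "x = 2 * y + 1" using oddE by blast
  then show ?thesis by simp
qed

lemma one_plus_X_power: "((1 + fps_X :: 'a::comm_ring_1 fps) ^ m) $ j = of_nat (m choose j)"
proof (induction m arbitrary: j)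
  case 0 then show ?case by (cases j) simp_all
next
  case (Suc m)
  show ?case
  proof (cases j)
    case 0 then show ?thesis using Suc by (simp add: algebra_simps)
  next
    case (Suc j') then show ?thesis using Suc.IH by (simp add: algebra_simps)
  qed
qed

lemma two_pow_decomp: "(n::nat) > 0 \<Longrightarrow> \<exists>a q. n = 2 ^ a * q \<and> odd q"
proof (induction n rule: less_induct)
  case (less n)
  show ?case
  proof (cases "even n")
    case True
    then obtain h where h: "n = 2 * h" by blast
    with less.prems have "h < n" "h > 0" by auto
    with less.IH obtain a q where "h = 2 ^ a * q" "odd q" by blast
    with h have "n = 2 ^ Suc a * q" by simp
    with \<open>odd q\<close> show ?thesis by blast
  next
    case False
    then show ?thesis by (metis mult_1 power_0)
  qed
qed


lemma succ_lt_pow: "2 \<le> (n::nat) \<Longrightarrow> n + 1 < 2 ^ n"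
proof (induction n rule: dec_induct)
  case base then show ?case by simp
next
  case (step n) then show ?case by simp
qed

definition QQ :: "nat \<Rightarrow> int" where
  "QQ N = (\<Prod>j\<in>{j\<in>{1..N+1}. odd j}. int j)"

lemma QQ_odd: "odd (QQ N)"
  unfolding QQ_def by (subst even_prod_iff) auto

lemma QQ_dvd:
  assumes "n \<le> N"
  shows "int (n + 1) dvd QQ N * 2 ^ n"
    and "2 \<le> n \<Longrightarrow> 2 * int (n + 1) dvd QQ N * 2 ^ n"
proof -
  obtain a q where aq: "n + 1 = 2 ^ a * q" "odd q" using two_pow_decomp[of "n+1"] by auto
  have q1: "q \<ge> 1" using aq by (cases q) auto
  have qle: "q \<le> n + 1" unfolding aq(1) by simp
  have qin: "q \<in> {j\<in>{1..N+1}. odd j}" using q1 qle aq(2) assms by auto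
  have qd: "int q dvd QQ N" unfolding QQ_def using qin by (intro dvd_prodI) auto
  have pa: "2 ^ a \<le> n + 1" using aq q1 by (metis mult_le_mono2 mult_1_right)
  have "n + 1 \<le> 2 ^ n" using less_exp[of n] by (simp only: Suc_eq_plus1[symmetric] Suc_le_eq)
  hence "(2::nat) ^ a \<le> 2 ^ n" using pa by linarith
  hence an: "a \<le> n" using power_le_imp_le_exp by (metis one_less_numeral_iff semiring_norm(76))
  have ieq: "int (n + 1) = 2 ^ a * int q" using aq by (metis of_nat_mult of_nat_numeral of_nat_power)
  show "int (n + 1) dvd QQ N * 2 ^ n"
    unfolding ieq using qd le_imp_power_dvd[OF an, of "2::int"]
    by (metis mult.commute mult_dvd_mono)
  assume n2: "2 \<le> n"
  have "(2::nat) ^ a < 2 ^ n" using pa succ_lt_pow[OF n2] by linarith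
  hence an2: "a + 1 \<le> n" using power_less_imp_less_exp by (metis Suc_eq_plus1 Suc_leI one_less_numeral_iff semiring_norm(76))
  have "2 * int (n + 1) = 2 ^ (a + 1) * int q" using ieq by simp
  thus "2 * int (n + 1) dvd QQ N * 2 ^ n"
    using qd le_imp_power_dvd[OF an2, of "2::int"] by (metis mult.commute mult_dvd_mono)
qed


lemma mainN:
  assumes N1: "1 \<le> N"
  shows "\<exists>c. (log1p_over_z ^ (N+1)) $ N * of_int (QQ N ^ (N+1)) * 2 ^ N = of_int c
             \<and> (of_int c :: bit) = of_nat (N+1)"
proof -
  define f where "f = log1p_over_z"
  define e where "e n = (-1) ^ n * (QQ N * 2 ^ n div int (n + 1))" for n
  define G where "G = Abs_fps e"
  define H where "H = fps_const (of_int (QQ N)) * sc 2 f"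
  define m where "m = N + 1"
  have Hn: "H $ n = of_int (e n)" if "n \<le> N" for n
  proof -
    have "H $ n = of_int (QQ N) * (2 ^ n * ((-1) ^ n / of_nat (n + 1)))"
      by (simp add: H_def sc_def f_def f_nth)
    also have "\<dots> = (-1) ^ n * (of_int (QQ N * 2 ^ n) / of_int (int (n + 1)))"
      by simp
    also have "\<dots> = of_int (e n)"
      unfolding e_def using of_int_div[OF QQ_dvd(1)[OF that], where 'a=rat]
      by simp
    finally show ?thesis .
  qed
  have H1: "(H ^ m) $ N = of_int (QQ N) ^ m * (2 ^ N * (f ^ m) $ N)"
    unfolding H_def power_mult_distrib fps_const_power sc_power[symmetric]
    by (simp add: sc_def)
  have H2: "(H ^ m) $ N = ((fI G :: rat fps) ^ m) $ N"
    by (rule trunc_power[of N]) (simp_all add: Hn fI_def G_def)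
  have H3: "((fI G :: rat fps) ^ m) $ N = of_int ((G ^ m) $ N)"
    unfolding fI_power[symmetric] by (simp add: fI_def)
  have B1: "(fI G :: bit fps) $ i = (1 + fps_X) $ i" if iN: "i \<le> N" for i
  proof -
    consider "i = 0" | "i = 1" | "2 \<le> i" by linarith
    then show ?thesis
    proof cases
      case 1 then show ?thesis using QQ_odd[of N]
        by (simp add: fI_def G_def e_def bit_of_int)
    next
      case 2 then show ?thesis using QQ_odd[of N]
        by (simp add: fI_def G_def e_def bit_of_int)
    next
      case 3
      obtain t where t: "QQ N * 2 ^ i = 2 * int (i + 1) * t"
        using QQ_dvd(2)[OF iN 3] by (elim dvdE)
      have "QQ N * 2 ^ i div int (i + 1) = 2 * t"
        proof -
        have "2 * int (i + 1) * t = int (i + 1) * (2 * t)" by (simp only: ac_simps)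
        moreover have "int (i + 1) \<noteq> 0" by simp
        ultimately show ?thesis unfolding t by (metis nonzero_mult_div_cancel_left)
      qed
      then have "even (e i)" unfolding e_def by simp
      then show ?thesis using 3 by (simp add: fI_def G_def bit_of_int)
    qed
  qed
  have B2: "((fI G :: bit fps) ^ m) $ N = of_nat (N + 1)"
  proof -
    have "((fI G :: bit fps) ^ m) $ N = ((1 + fps_X) ^ m) $ N"
      by (rule trunc_power[of N]) (simp_all add: B1)
    also have "\<dots> = of_nat (m choose N)" by (rule one_plus_X_power)
    finally show ?thesis by (simp add: m_def)
  qed
  have B3: "((fI G :: bit fps) ^ m) $ N = of_int ((G ^ m) $ N)"
    unfolding fI_power[symmetric] by (simp add: fI_def)
  show ?thesis
  proof (intro exI conjI)
    show "(log1p_over_z ^ (N+1)) $ N * of_int (QQ N ^ (N+1)) * 2 ^ N = of_int ((G ^ m) $ N)"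
      using H1 H2 H3 by (simp add: f_def m_def algebra_simps)
    show "(of_int ((G ^ m) $ N) :: bit) = of_nat (N + 1)" using B2 B3 by simp
  qed
qed

theorem lemmaA:
  fixes k :: nat
  shows "nu2 ((log1p_over_z ^ (4 * k + 1)) $ (4 * k)) = - (4 * int k)"
proof (cases "k = 0")
  case True
  have "log1p_over_z $ 0 = 1" by (simp add: f_nth)
  then have "(log1p_over_z ^ (4 * k + 1)) $ (4 * k) * of_int 1 * 2 ^ 0 = of_int 1"
    using True by simp
  from nu2_char[OF this] True show ?thesis by simp
next
  case False
  then have "1 \<le> 4 * k" by simp
  from mainN[OF this] obtain c where
    c1: "(log1p_over_z ^ (4 * k + 1)) $ (4 * k) * of_int (QQ (4 * k) ^ (4 * k + 1)) * 2 ^ (4 * k) = of_int c"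
    and c2: "(of_int c :: bit) = of_nat (4 * k + 1)" by blast
  have "(of_nat (4 * k + 1) :: bit) = of_int (int (4 * k + 1))" by simp
  also have "\<dots> = 1" by (simp only: bit_of_int) simp
  finally have "odd c" using c2 bit_of_int[of c] by (auto split: if_splits)
  moreover have "odd (QQ (4 * k) ^ (4 * k + 1))" using QQ_odd by simp
  ultimately have "nu2 ((log1p_over_z ^ (4 * k + 1)) $ (4 * k)) = - int (4 * k)"
    using nu2_char[OF c1] by blast
  then show ?thesis by simp
qed

end
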